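(* Let $\varepsilon\in\{0,\tfrac12\}$. Every skewsymmetric biderivation $f$ of $\mathcal{SV}(\varepsilon)$ is inner, i.e. there is $\lambda\in\mathbb{C}$ with $f(x,y)=\lambda[x,y]$ for all $x,y\in\mathcal{SV}(\varepsilon)$.
   Context: For $\varepsilon\in\{0,\frac12\}$, $\mathcal{SV}(\varepsilon)$ is the complex Lie algebra with basis $\{L_i,Y_j,M_i\mid i\in\mathbb{Z},\ j\in\varepsilon+\mathbb{Z}\}$ and brackets $[L_m,L_n]=(m-n)L_{m+n}$, $[L_m,Y_n]=(\frac12 m-n)Y_{m+n}$, $[L_m,M_n]=-nM_{m+n}$, $[Y_m,Y_n]=(m-n)M_{m+n}$, $[Y_m,M_n]=[M_m,M_n]=0$. A biderivation of a Lie algebra $L$ is a bilinear map $f:L\times L\to L$ with $f([x,y],z)=[x,f(y,z)]+[f(x,z),y]$ and $f(x,[y,z])=[f(x,y),z]+[y,f(x,z)]$ for all $x,y,z\in L$; it is skewsymmetric if $f(x,y)=-f(y,x)$ for all $x,y$. *)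

theory Defs
  imports Complex_Main
begin

text \<open>Basis of SV(eps): L i (i integer), Y j (j real, required to lie in eps + Z),
  M i (i integer). Vectors are finitely supported coefficient functions.\<close>

datatype sv_idx = L int | Y real | M int

definition sv_unit :: "sv_idx \<Rightarrow> sv_idx \<Rightarrow> complex" where
  "sv_unit a = (\<lambda>b. if b = a then 1 else 0)"

definition vscale :: "complex \<Rightarrow> (sv_idx \<Rightarrow> complex) \<Rightarrow> (sv_idx \<Rightarrow> complex)" where
  "vscale c x = (\<lambda>k. c * x k)"

definition vadd :: "(sv_idx \<Rightarrow> complex) \<Rightarrow> (sv_idx \<Rightarrow> complex) \<Rightarrow> (sv_idx \<Rightarrow> complex)" where
  "vadd x y = (\<lambda>k. x k + y k)"

text \<open>Bracket of basis elements. For Y indices m, n in eps + Z one has m + n in Z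
  (since 2 eps is an integer), so floor (m + n) = m + n.\<close>
fun sv_br :: "sv_idx \<Rightarrow> sv_idx \<Rightarrow> sv_idx \<Rightarrow> complex" where
  "sv_br (L m) (L n) = vscale (of_int (m - n)) (sv_unit (L (m + n)))"
| "sv_br (L m) (Y n) = vscale (of_real (of_int m / 2 - n)) (sv_unit (Y (of_int m + n)))"
| "sv_br (Y n) (L m) = vscale (- of_real (of_int m / 2 - n)) (sv_unit (Y (of_int m + n)))"
| "sv_br (L m) (M n) = vscale (- of_int n) (sv_unit (M (m + n)))"
| "sv_br (M n) (L m) = vscale (of_int n) (sv_unit (M (m + n)))"
| "sv_br (Y m) (Y n) = vscale (of_real (m - n)) (sv_unit (M (floor (m + n))))"
| "sv_br (Y m) (M n) = (\<lambda>_. 0)"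
| "sv_br (M n) (Y m) = (\<lambda>_. 0)"
| "sv_br (M m) (M n) = (\<lambda>_. 0)"

definition sv_supp :: "(sv_idx \<Rightarrow> complex) \<Rightarrow> sv_idx set" where
  "sv_supp x = {a. x a \<noteq> 0}"

definition SV :: "real \<Rightarrow> (sv_idx \<Rightarrow> complex) set" where
  "SV eps = {x. finite (sv_supp x) \<and> (\<forall>r. x (Y r) \<noteq> 0 \<longrightarrow> r - eps \<in> \<int>)}"

definition sv_bracket :: "(sv_idx \<Rightarrow> complex) \<Rightarrow> (sv_idx \<Rightarrow> complex) \<Rightarrow> (sv_idx \<Rightarrow> complex)" where
  "sv_bracket x y = (\<lambda>k. \<Sum>a\<in>sv_supp x. \<Sum>b\<in>sv_supp y. x a * y b * sv_br a b k)"

definition sv_bilinear :: "real \<Rightarrow> ((sv_idx \<Rightarrow> complex) \<Rightarrow> (sv_idx \<Rightarrow> complex) \<Rightarrow> (sv_idx \<Rightarrow> complex)) \<Rightarrow> bool" where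
  "sv_bilinear eps f \<longleftrightarrow>
     (\<forall>x\<in>SV eps. \<forall>y\<in>SV eps. f x y \<in> SV eps) \<and>
     (\<forall>x\<in>SV eps. \<forall>y\<in>SV eps. \<forall>z\<in>SV eps. f (vadd x y) z = vadd (f x z) (f y z)) \<and>
     (\<forall>x\<in>SV eps. \<forall>y\<in>SV eps. \<forall>z\<in>SV eps. f x (vadd y z) = vadd (f x y) (f x z)) \<and>
     (\<forall>c. \<forall>x\<in>SV eps. \<forall>y\<in>SV eps. f (vscale c x) y = vscale c (f x y)) \<and>
     (\<forall>c. \<forall>x\<in>SV eps. \<forall>y\<in>SV eps. f x (vscale c y) = vscale c (f x y))"

definition sv_biderivation :: "real \<Rightarrow> ((sv_idx \<Rightarrow> complex) \<Rightarrow> (sv_idx \<Rightarrow> complex) \<Rightarrow> (sv_idx \<Rightarrow> complex)) \<Rightarrow> bool" where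
  "sv_biderivation eps f \<longleftrightarrow> sv_bilinear eps f \<and>
     (\<forall>x\<in>SV eps. \<forall>y\<in>SV eps. \<forall>z\<in>SV eps.
        f (sv_bracket x y) z = vadd (sv_bracket x (f y z)) (sv_bracket (f x z) y)) \<and>
     (\<forall>x\<in>SV eps. \<forall>y\<in>SV eps. \<forall>z\<in>SV eps.
        f x (sv_bracket y z) = vadd (sv_bracket (f x y) z) (sv_bracket y (f x z)))"

definition sv_skew :: "real \<Rightarrow> ((sv_idx \<Rightarrow> complex) \<Rightarrow> (sv_idx \<Rightarrow> complex) \<Rightarrow> (sv_idx \<Rightarrow> complex)) \<Rightarrow> bool" where
  "sv_skew eps f \<longleftrightarrow> (\<forall>x\<in>SV eps. \<forall>y\<in>SV eps. f x y = vscale (-1) (f y x))"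

end

theory Submission
  imports Defs
begin


definition valid :: "real \<Rightarrow> sv_idx \<Rightarrow> bool" where
 "valid eps a = (case a of Y r \<Rightarrow> r - eps \<in> \<int> | _ \<Rightarrow> True)"

fun deg :: "sv_idx \<Rightarrow> real" where
 "deg (L n) = of_int n" | "deg (Y r) = r" | "deg (M n) = of_int n"

lemma supp_unit[simp]: "sv_supp (sv_unit a) = {a}" by (auto simp: sv_supp_def sv_unit_def)

lemma unit_SV: "valid eps a \<Longrightarrow> sv_unit a \<in> SV eps"
  by (simp add: SV_def, auto simp: valid_def sv_unit_def split: sv_idx.splits)

lemma SV_fin: "x \<in> SV eps \<Longrightarrow> finite (sv_supp x)" by (simp add: SV_def)

lemma sv_bracket_sum:
  assumes "finite A" "finite B" "sv_supp x \<subseteq> A" "sv_supp y \<subseteq> B"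
  shows "sv_bracket x y k = (\<Sum>a\<in>A. \<Sum>b\<in>B. x a * y b * sv_br a b k)"
proof -
  have "sv_bracket x y k = (\<Sum>a\<in>sv_supp x. \<Sum>b\<in>B. x a * y b * sv_br a b k)"
    unfolding sv_bracket_def
    apply (rule sum.cong[OF refl])
    apply (rule sum.mono_neutral_left)
    using assms by (auto simp: sv_supp_def)
  also have "\<dots> = (\<Sum>a\<in>A. \<Sum>b\<in>B. x a * y b * sv_br a b k)"
    apply (rule sum.mono_neutral_left)
    using assms by (auto simp: sv_supp_def)
  finally show ?thesis .
qed

lemma br_units[simp]: "sv_bracket (sv_unit a) (sv_unit b) = sv_br a b"
  by (rule ext) (simp only: sv_bracket_def supp_unit, simp add: sv_unit_def)

lemma br_unit_left: "sv_bracket (sv_unit a) v k = (\<Sum>b\<in>sv_supp v. v b * sv_br a b k)"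
  by (simp only: sv_bracket_def supp_unit, simp add: sv_unit_def)

lemma sv_br_anti: "sv_br a b k = - sv_br b a k"
  by (cases a; cases b) (auto simp: vscale_def sv_unit_def add.commute)

lemma sv_bracket_anti:
  assumes "finite (sv_supp x)" "finite (sv_supp y)"
  shows "sv_bracket x y k = - sv_bracket y x k"
  unfolding sv_bracket_def
  apply (subst sum.swap)
  apply (simp add: sum_negf[symmetric])
  apply (rule sum.cong[OF refl])+
  apply (subst sv_br_anti) by simp

lemma sum_single: "finite S \<Longrightarrow> (\<And>b. b \<in> S \<Longrightarrow> b \<noteq> bb \<Longrightarrow> h b = 0) \<Longrightarrow> (bb \<notin> S \<Longrightarrow> h bb = 0) \<Longrightarrow> sum h S = h bb"
  by (metis sum.neutral sum.remove add_0_right DiffE insertI1 insert_Diff)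


lemma fin_vscale: "sv_supp (vscale c x) \<subseteq> sv_supp x" by (auto simp: sv_supp_def vscale_def)

lemma c_LL: "finite (sv_supp v) \<Longrightarrow> sv_bracket (sv_unit (L m)) v (L n) = of_int (2*m - n) * v (L (n - m))"
  unfolding br_unit_left
  apply (subst sum_single[where bb="L (n-m)"])
  apply assumption
  subgoal for b by (cases b) (auto simp: vscale_def sv_unit_def)
  apply (simp add: sv_supp_def)
  by (simp add: vscale_def sv_unit_def algebra_simps)

lemma c_LY: "finite (sv_supp v) \<Longrightarrow> sv_bracket (sv_unit (L m)) v (Y r) = of_real (3*of_int m/2 - r) * v (Y (r - of_int m))"
  unfolding br_unit_left
  apply (subst sum_single[where bb="Y (r - of_int m)"])
  apply assumption
  subgoal for b by (cases b) (auto simp: vscale_def sv_unit_def)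
  apply (simp add: sv_supp_def)
  by (simp add: vscale_def sv_unit_def algebra_simps)

lemma c_LM: "finite (sv_supp v) \<Longrightarrow> sv_bracket (sv_unit (L m)) v (M n) = of_int (m - n) * v (M (n - m))"
  unfolding br_unit_left
  apply (subst sum_single[where bb="M (n-m)"])
  apply assumption
  subgoal for b by (cases b) (auto simp: vscale_def sv_unit_def)
  apply (simp add: sv_supp_def)
  by (simp add: vscale_def sv_unit_def algebra_simps)

lemma c_YL: "sv_bracket (sv_unit (Y s)) v (L n) = 0"
  unfolding br_unit_left
  apply (rule sum.neutral)
  apply clarify subgoal for x by (cases x) (auto simp: vscale_def sv_unit_def)
  done

lemma c_YY: "r - s = of_int j \<Longrightarrow> finite (sv_supp v) \<Longrightarrow> sv_bracket (sv_unit (Y s)) v (Y r) = - of_real (of_int j/2 - s) * v (L j)"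
  unfolding br_unit_left
  apply (subst sum_single[where bb="L j"])
  apply assumption
  subgoal for b by (cases b) (auto simp: vscale_def sv_unit_def)
  apply (simp add: sv_supp_def)
  by (simp add: vscale_def sv_unit_def algebra_simps)

lemma c_ML: "sv_bracket (sv_unit (M s)) v (L n) = 0"
  unfolding br_unit_left
  apply (rule sum.neutral)
  apply clarify subgoal for x by (cases x) (auto simp: vscale_def sv_unit_def)
  done

lemma c_MY: "sv_bracket (sv_unit (M s)) v (Y n) = 0"
  unfolding br_unit_left
  apply (rule sum.neutral)
  apply clarify subgoal for x by (cases x) (auto simp: vscale_def sv_unit_def)
  done

lemma c_MM: "finite (sv_supp v) \<Longrightarrow> sv_bracket (sv_unit (M s)) v (M n) = of_int s * v (L (n - s))"
  unfolding br_unit_left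
  apply (subst sum_single[where bb="L (n-s)"])
  apply assumption
  subgoal for b by (cases b) (auto simp: vscale_def sv_unit_def)
  apply (simp add: sv_supp_def)
  by (simp add: vscale_def sv_unit_def algebra_simps)

lemma int_sum_valid:
  fixes eps :: real
  assumes "eps = 0 \<or> eps = 1/2" "s - eps \<in> \<int>" "t - eps \<in> \<int>"
  shows "s + t \<in> \<int>"
proof -
  have "s + t = (s - eps) + (t - eps) + 2*eps" by simp
  moreover have "2*eps \<in> \<int>" using assms(1) by (metis Ints_0 Ints_1 mult_zero_right nonzero_mult_div_cancel_left times_divide_eq_right zero_neq_numeral)
  ultimately show ?thesis using assms by (metis Ints_add)
qed

lemma c_YM:
  assumes e: "eps = 0 \<or> eps = 1/2" and v: "v \<in> SV eps" and s: "s - eps \<in> \<int>"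
  shows "sv_bracket (sv_unit (Y s)) v (M n) = of_real (2*s - of_int n) * v (Y (of_int n - s))"
  unfolding br_unit_left
  apply (subst sum_single[where bb="Y (of_int n - s)"])
  using v apply (simp add: SV_def)
  subgoal for b
  proof (cases b)
    case (Y t)
    assume "b \<in> sv_supp v" "b \<noteq> Y (of_int n - s)"
    then have "t - eps \<in> \<int>" "t \<noteq> of_int n - s" using v Y by (auto simp: SV_def sv_supp_def)
    then obtain i where i: "s + t = of_int i" using int_sum_valid[OF e s] by (metis Ints_cases)
    then show ?thesis using Y \<open>t \<noteq> of_int n - s\<close> by (auto simp: vscale_def sv_unit_def)
  qed (auto simp: vscale_def sv_unit_def)
  apply (simp add: sv_supp_def)
  by (simp add: vscale_def sv_unit_def algebra_simps)

lemma c_L0: "finite (sv_supp v) \<Longrightarrow> sv_bracket (sv_unit (L 0)) v k = - of_real (deg k) * v k"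
  by (cases k) (simp_all add: c_LL c_LY c_LM)


lemma fin_unit: "finite (sv_supp (sv_unit a))" by simp

lemma supp_vadd: "sv_supp (vadd x y) \<subseteq> sv_supp x \<union> sv_supp y" by (auto simp: sv_supp_def vadd_def)
lemma supp_zero[simp]: "sv_supp (\<lambda>_. 0) = {}" by (simp add: sv_supp_def)

lemma br_scale_r: assumes "finite (sv_supp x)" "finite (sv_supp y)"
  shows "sv_bracket x (vscale c y) = vscale c (sv_bracket x y)"
proof (rule ext)
  fix k
  have "sv_bracket x (vscale c y) k = (\<Sum>a\<in>sv_supp x. \<Sum>b\<in>sv_supp y. x a * vscale c y b * sv_br a b k)"
    by (rule sv_bracket_sum) (use assms fin_vscale in auto)
  also have "\<dots> = c * (\<Sum>a\<in>sv_supp x. \<Sum>b\<in>sv_supp y. x a * y b * sv_br a b k)"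
    by (simp add: vscale_def sum_distrib_left algebra_simps)
  also have "\<dots> = vscale c (sv_bracket x y) k"
    by (simp add: vscale_def sv_bracket_def)
  finally show "sv_bracket x (vscale c y) k = vscale c (sv_bracket x y) k" .
qed

lemma br_scale_l: assumes "finite (sv_supp x)" "finite (sv_supp y)"
  shows "sv_bracket (vscale c x) y = vscale c (sv_bracket x y)"
proof (rule ext)
  fix k
  have "sv_bracket (vscale c x) y k = (\<Sum>a\<in>sv_supp x. \<Sum>b\<in>sv_supp y. vscale c x a * y b * sv_br a b k)"
    by (rule sv_bracket_sum) (use assms fin_vscale in auto)
  also have "\<dots> = c * (\<Sum>a\<in>sv_supp x. \<Sum>b\<in>sv_supp y. x a * y b * sv_br a b k)"
    by (simp add: vscale_def sum_distrib_left algebra_simps)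
  also have "\<dots> = vscale c (sv_bracket x y) k"
    by (simp add: vscale_def sv_bracket_def)
  finally show "sv_bracket (vscale c x) y k = vscale c (sv_bracket x y) k" .
qed

lemma br_add_l: assumes "finite (sv_supp x)" "finite (sv_supp y)" "finite (sv_supp z)"
  shows "sv_bracket (vadd x y) z = vadd (sv_bracket x z) (sv_bracket y z)"
proof (rule ext)
  fix k
  let ?A = "sv_supp x \<union> sv_supp y"
  have "sv_bracket (vadd x y) z k = (\<Sum>a\<in>?A. \<Sum>b\<in>sv_supp z. vadd x y a * z b * sv_br a b k)"
    by (rule sv_bracket_sum) (use assms supp_vadd in auto)
  also have "\<dots> = (\<Sum>a\<in>?A. \<Sum>b\<in>sv_supp z. x a * z b * sv_br a b k) + (\<Sum>a\<in>?A. \<Sum>b\<in>sv_supp z. y a * z b * sv_br a b k)"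
    by (simp add: vadd_def sum.distrib[symmetric] algebra_simps)
  also have "\<dots> = sv_bracket x z k + sv_bracket y z k"
    by (subst (1 2) sv_bracket_sum[where A="?A" and B="sv_supp z"]) (use assms in auto)
  finally show "sv_bracket (vadd x y) z k = vadd (sv_bracket x z) (sv_bracket y z) k" by (simp add: vadd_def)
qed

lemma br_add_r: assumes "finite (sv_supp x)" "finite (sv_supp y)" "finite (sv_supp z)"
  shows "sv_bracket z (vadd x y) = vadd (sv_bracket z x) (sv_bracket z y)"
proof (rule ext)
  fix k
  let ?A = "sv_supp x \<union> sv_supp y"
  have "sv_bracket z (vadd x y) k = (\<Sum>a\<in>sv_supp z. \<Sum>b\<in>?A. z a * vadd x y b * sv_br a b k)"
    by (rule sv_bracket_sum) (use assms supp_vadd in auto)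
  also have "\<dots> = (\<Sum>a\<in>sv_supp z. \<Sum>b\<in>?A. z a * x b * sv_br a b k) + (\<Sum>a\<in>sv_supp z. \<Sum>b\<in>?A. z a * y b * sv_br a b k)"
    by (simp add: vadd_def sum.distrib[symmetric] algebra_simps)
  also have "\<dots> = sv_bracket z x k + sv_bracket z y k"
    by (subst (1 2) sv_bracket_sum[where B="?A" and A="sv_supp z"]) (use assms in auto)
  finally show "sv_bracket z (vadd x y) k = vadd (sv_bracket z x) (sv_bracket z y) k" by (simp add: vadd_def)
qed

lemma br_zero_l[simp]: "sv_bracket (\<lambda>_. 0) y = (\<lambda>_. 0)"
  by (simp add: sv_bracket_def)
lemma br_zero_r[simp]: "sv_bracket y (\<lambda>_. 0) = (\<lambda>_. 0)"
  by (simp add: sv_bracket_def)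

lemma br_us_r: "sv_bracket (sv_unit a) (vscale c (sv_unit b)) = vscale c (sv_br a b)"
  by (simp add: br_scale_r)
lemma br_us_l: "sv_bracket (vscale c (sv_unit a)) (sv_unit b) = vscale c (sv_br a b)"
  by (simp add: br_scale_l)

lemma brL0: "sv_br (L 0) b = vscale (- of_real (deg b)) (sv_unit b)"
  by (cases b) (auto simp: vscale_def)

lemma vscale_vscale[simp]: "vscale a (vscale b x) = vscale (a*b) x" by (simp add: vscale_def fun_eq_iff)

fun tg :: "sv_idx \<Rightarrow> sv_idx \<Rightarrow> sv_idx" where
  "tg (L m) (L n) = L (m + n)"
| "tg (L m) (Y n) = Y (of_int m + n)"
| "tg (Y n) (L m) = Y (of_int m + n)"
| "tg (L m) (M n) = M (m + n)"
| "tg (M n) (L m) = M (m + n)"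
| "tg (Y m) (Y n) = M (floor (m + n))"
| "tg (Y m) (M n) = Y m"
| "tg (M n) (Y m) = M n"
| "tg (M m) (M n) = M m"

lemma br_form: "sv_br a b = vscale (sv_br a b (tg a b)) (sv_unit (tg a b))"
  by (cases a; cases b) (auto simp: vscale_def sv_unit_def fun_eq_iff)

lemma tg_valid: "valid eps a \<Longrightarrow> valid eps b \<Longrightarrow> valid eps (tg a b)"
  by (cases a; cases b) (auto simp: valid_def add_diff_eq[symmetric])

lemma fin_br: "finite (sv_supp (sv_br a b))"
  by (subst br_form) (rule finite_subset[OF fin_vscale], simp)

lemma fin_vscale2: "finite (sv_supp x) \<Longrightarrow> finite (sv_supp (vscale c x))"
  using fin_vscale finite_subset by blast




lemma jac:
  fixes eps :: real
  assumes e: "eps = 0 \<or> eps = 1/2" and vy: "valid eps y" and vb: "valid eps b"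
  shows "vadd (sv_bracket (sv_unit (L m)) (sv_br y b)) (sv_bracket (sv_br (L m) b) (sv_unit y)) = sv_bracket (sv_br (L m) y) (sv_unit b)"
proof (cases y; cases b)
  fix s t assume y: "y = Y s" and b: "b = Y t"
  have "s + t \<in> \<int>" using int_sum_valid[OF e] vy vb y b by (auto simp: valid_def)
  then obtain i where i: "s + t = of_int i" by (metis Ints_cases)
  have f1: "floor (s + t) = i" using i by (metis floor_of_int)
  have f2: "floor (t + s) = i" using f1 by (metis add.commute)
  have "of_int m + t + s = real_of_int (m + i)" using i by simp
  then have f3: "floor (of_int m + t + s) = m + i" by (metis floor_of_int)
  have "of_int m + s + t = real_of_int (m + i)" using i by simp
  then have f4: "floor (of_int m + s + t) = m + i" by (metis floor_of_int)
  have ci: "(of_int i :: complex) = of_real s + of_real t" using i by (metis of_real_add of_real_of_int_eq)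
  show ?thesis using y b i
    apply (simp add: br_us_r br_us_l f1 f2 f3 f4)
    apply (simp add: fun_eq_iff vadd_def vscale_def sv_unit_def algebra_simps)
    by (simp add: ci field_simps)
qed (simp add: br_us_r br_us_l, simp add: fun_eq_iff vadd_def vscale_def sv_unit_def algebra_simps, (simp add: field_simps)?)+




lemma validL[simp]: "valid eps (L n)" and validM[simp]: "valid eps (M n)" by (simp_all add: valid_def)

locale sbd =
  fixes eps :: real and f :: "(sv_idx \<Rightarrow> complex) \<Rightarrow> (sv_idx \<Rightarrow> complex) \<Rightarrow> (sv_idx \<Rightarrow> complex)"
  assumes e: "eps = 0 \<or> eps = 1/2" and bd: "sv_biderivation eps f" and sk: "sv_skew eps f"
begin

lemma bil: "sv_bilinear eps f" using bd by (simp add: sv_biderivation_def)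
lemma f_SV: "x \<in> SV eps \<Longrightarrow> y \<in> SV eps \<Longrightarrow> f x y \<in> SV eps" using bil by (simp add: sv_bilinear_def)
lemma f_add_l: "x \<in> SV eps \<Longrightarrow> y \<in> SV eps \<Longrightarrow> z \<in> SV eps \<Longrightarrow> f (vadd x y) z = vadd (f x z) (f y z)"
  using bil unfolding sv_bilinear_def by blast
lemma f_add_r: "x \<in> SV eps \<Longrightarrow> y \<in> SV eps \<Longrightarrow> z \<in> SV eps \<Longrightarrow> f x (vadd y z) = vadd (f x y) (f x z)"
  using bil unfolding sv_bilinear_def by blast
lemma f_sc_l: "x \<in> SV eps \<Longrightarrow> y \<in> SV eps \<Longrightarrow> f (vscale c x) y = vscale c (f x y)"
  using bil unfolding sv_bilinear_def by blast
lemma f_sc_r: "x \<in> SV eps \<Longrightarrow> y \<in> SV eps \<Longrightarrow> f x (vscale c y) = vscale c (f x y)"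
  using bil unfolding sv_bilinear_def by blast
lemma B1: "x \<in> SV eps \<Longrightarrow> y \<in> SV eps \<Longrightarrow> z \<in> SV eps \<Longrightarrow>
        f (sv_bracket x y) z = vadd (sv_bracket x (f y z)) (sv_bracket (f x z) y)"
  using bd unfolding sv_biderivation_def by blast
lemma B2: "x \<in> SV eps \<Longrightarrow> y \<in> SV eps \<Longrightarrow> z \<in> SV eps \<Longrightarrow>
        f x (sv_bracket y z) = vadd (sv_bracket (f x y) z) (sv_bracket y (f x z))"
  using bd unfolding sv_biderivation_def by blast
lemma skew: "x \<in> SV eps \<Longrightarrow> y \<in> SV eps \<Longrightarrow> f x y = vscale (-1) (f y x)"
  using sk unfolding sv_skew_def by blast

abbreviation F where "F a b \<equiv> f (sv_unit a) (sv_unit b)"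
definition g where "g b = F (L 0) b"
definition lam where "lam = - g (L 1) (L 1)"

lemma uSV: "valid eps a \<Longrightarrow> sv_unit a \<in> SV eps" by (rule unit_SV)

lemma F_SV: "valid eps a \<Longrightarrow> valid eps b \<Longrightarrow> F a b \<in> SV eps" by (simp add: f_SV uSV)
lemma F_fin: "valid eps a \<Longrightarrow> valid eps b \<Longrightarrow> finite (sv_supp (F a b))" using F_SV SV_fin by blast
lemma g_SV: "valid eps b \<Longrightarrow> g b \<in> SV eps" by (simp add: g_def F_SV)
lemma g_fin: "valid eps b \<Longrightarrow> finite (sv_supp (g b))" by (simp add: g_def F_fin)

lemma F_anti: "valid eps a \<Longrightarrow> valid eps b \<Longrightarrow> F a b k = - F b a k"
proof -
  assume a: "valid eps a" and b: "valid eps b"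
  have "F a b = vscale (-1) (F b a)" by (rule skew) (simp_all add: uSV a b)
  then have "F a b k = vscale (-1) (F b a) k" by (rule fun_cong)
  then show ?thesis by (simp add: vscale_def)
qed

lemma F_self: assumes "valid eps a" shows "F a a = (\<lambda>_. 0)"
proof (rule ext)
  fix k
  have "F a a k = - F a a k" by (rule F_anti[OF assms assms])
  then show "F a a k = 0" by simp
qed

lemma g_L0: "g (L 0) = (\<lambda>_. 0)" by (simp add: g_def F_self)

lemma f_sc_unit_l: "valid eps t \<Longrightarrow> valid eps b \<Longrightarrow> f (vscale c (sv_unit t)) (sv_unit b) = vscale c (F t b)"
  by (simp add: f_sc_l uSV)
lemma f_sc_unit_r: "valid eps t \<Longrightarrow> valid eps b \<Longrightarrow> f (sv_unit b) (vscale c (sv_unit t)) = vscale c (F b t)"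
  by (simp add: f_sc_r uSV)

lemma G: assumes b: "valid eps b" and k: "deg k \<noteq> deg b" shows "g b k = 0"
proof -
  have "f (sv_unit (L 0)) (sv_bracket (sv_unit (L 0)) (sv_unit b)) =
        vadd (sv_bracket (F (L 0) (L 0)) (sv_unit b)) (sv_bracket (sv_unit (L 0)) (F (L 0) b))"
    by (rule B2) (simp_all add: uSV b)
  then have "vscale (- of_real (deg b)) (g b) = vadd (\<lambda>_. 0) (sv_bracket (sv_unit (L 0)) (g b))"
    using b by (simp add: brL0 f_sc_unit_r F_self g_def)
  then have "vscale (- of_real (deg b)) (g b) k = vadd (\<lambda>_. 0) (sv_bracket (sv_unit (L 0)) (g b)) k"
    by (rule fun_cong)
  then have "- of_real (deg b) * g b k = - of_real (deg k) * g b k"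
    by (simp add: c_L0 g_fin b vscale_def vadd_def)
  then show ?thesis using k by auto
qed

lemma W: assumes a: "valid eps a" and b: "valid eps b"
  shows "of_real (deg k - deg a) * F a b k = - sv_bracket (sv_unit a) (g b) k"
proof -
  have "f (sv_bracket (sv_unit (L 0)) (sv_unit a)) (sv_unit b) =
        vadd (sv_bracket (sv_unit (L 0)) (F a b)) (sv_bracket (F (L 0) b) (sv_unit a))"
    by (rule B1) (simp_all add: uSV a b)
  then have "vscale (- of_real (deg a)) (F a b) = vadd (sv_bracket (sv_unit (L 0)) (F a b)) (sv_bracket (g b) (sv_unit a))"
    using a b by (simp add: brL0 f_sc_unit_l g_def)
  then have "vscale (- of_real (deg a)) (F a b) k = vadd (sv_bracket (sv_unit (L 0)) (F a b)) (sv_bracket (g b) (sv_unit a)) k"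
    by (rule fun_cong)
  then have "- of_real (deg a) * F a b k = - of_real (deg k) * F a b k + sv_bracket (g b) (sv_unit a) k"
    by (simp add: c_L0 F_fin a b vscale_def vadd_def)
  moreover have "sv_bracket (g b) (sv_unit a) k = - sv_bracket (sv_unit a) (g b) k"
    by (rule sv_bracket_anti) (simp_all add: g_fin b)
  ultimately show ?thesis by (simp add: algebra_simps)
qed

lemma Saa: "valid eps a \<Longrightarrow> sv_bracket (sv_unit a) (g a) k = 0"
  using W[of a a k] by (simp add: F_self)

lemma Cc: assumes a: "valid eps a" and b: "valid eps b" and k: "deg k = deg a + deg b"
  shows "of_real (deg a) * sv_bracket (sv_unit a) (g b) k + of_real (deg b) * sv_bracket (sv_unit b) (g a) k = 0"
proof -
  have 1: "sv_bracket (sv_unit a) (g b) k = - of_real (deg b) * F a b k" using W[OF a b, of k] k by simp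
  have 3: "F b a k = - F a b k" using F_anti[OF b a, of k] .
  have 2: "sv_bracket (sv_unit b) (g a) k = of_real (deg a) * F a b k" using W[OF b a, of k] k unfolding 3 by simp
  show ?thesis unfolding 1 2 by (simp add: algebra_simps)
qed

end



context sbd begin

lemma gLL: "g (L n) (L n) = - lam * of_int n"
proof (cases "n = 1")
  case True thus ?thesis by (simp add: lam_def)
next
  case False
  have "of_real (deg (L 1)) * sv_bracket (sv_unit (L 1)) (g (L n)) (L (1+n)) + of_real (deg (L n)) * sv_bracket (sv_unit (L n)) (g (L 1)) (L (1+n)) = 0"
    by (rule Cc) auto
  moreover have "sv_bracket (sv_unit (L 1)) (g (L n)) (L (1+n)) = of_int (1 - n) * g (L n) (L n)"
    using c_LL[OF g_fin, of "L n" 1 "1+n"] by simp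
  moreover have "sv_bracket (sv_unit (L n)) (g (L 1)) (L (1+n)) = of_int (n - 1) * g (L 1) (L 1)"
    using c_LL[OF g_fin, of "L 1" n "1+n"] by simp
  ultimately have "(1 - of_int n) * (g (L n) (L n) + lam * of_int n) = 0"
    by (simp add: lam_def algebra_simps)
  moreover have "(1 - of_int n :: complex) \<noteq> 0" using False
    by (metis eq_iff_diff_eq_0 of_int_eq_1_iff)
  ultimately have "g (L n) (L n) + lam * of_int n = 0" by simp
  then show ?thesis by (simp add: eq_neg_iff_add_eq_0)
qed

lemma gL: "g (L n) = vscale (- lam * of_int n) (sv_unit (L n))"
proof (rule ext)
  fix k
  show "g (L n) k = vscale (- lam * of_int n) (sv_unit (L n)) k"
  proof (cases "n = 0")
    case True thus ?thesis by (simp add: g_L0 vscale_def)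
  next
    case n: False
    show ?thesis
    proof (cases k)
      case (L j) then show ?thesis by (cases "j = n") (auto simp: gLL G vscale_def sv_unit_def)
    next
      case (Y r)
      show ?thesis
      proof (cases "r = of_int n")
        case True
        have "sv_bracket (sv_unit (L n)) (g (L n)) (Y (2 * of_int n)) = 0" by (rule Saa) simp
        moreover have "sv_bracket (sv_unit (L n)) (g (L n)) (Y (2 * of_int n)) = of_real (3 * of_int n / 2 - 2 * of_int n) * g (L n) (Y (of_int n))"
          using c_LY[OF g_fin, of "L n" n "2 * of_int n"] by simp
        moreover have "(of_real (3 * of_int n / 2 - 2 * of_int n) :: complex) \<noteq> 0" using n by simp
        ultimately show ?thesis using Y True by (simp add: vscale_def sv_unit_def)
      next
        case False thus ?thesis using Y by (simp add: G vscale_def sv_unit_def)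
      qed
    next
      case (M j)
      show ?thesis
      proof (cases "j = n")
        case True
        have "sv_bracket (sv_unit (L n)) (g (L n)) (M (2 * n)) = 0" by (rule Saa) simp
        moreover have "sv_bracket (sv_unit (L n)) (g (L n)) (M (2 * n)) = of_int (n - 2 * n) * g (L n) (M n)"
          using c_LM[OF g_fin, of "L n" n "2 * n"] by simp
        moreover have "(of_int (n - 2 * n) :: complex) \<noteq> 0" using n by simp
        ultimately show ?thesis using M True by (simp add: vscale_def sv_unit_def)
      next
        case False thus ?thesis using M by (simp add: G vscale_def sv_unit_def)
      qed
    qed
  qed
qed

lemma gL_Y[simp]: "g (L n) (Y r) = 0" by (simp add: gL vscale_def sv_unit_def)
lemma gL_M[simp]: "g (L n) (M j) = 0" by (simp add: gL vscale_def sv_unit_def)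

lemma gY_nz: assumes v: "valid eps (Y r)" and r: "r \<noteq> 0"
  shows "g (Y r) = vscale (- lam * of_real r) (sv_unit (Y r))"
proof (rule ext)
  fix k
  show "g (Y r) k = vscale (- lam * of_real r) (sv_unit (Y r)) k"
  proof (cases k)
    case (L j)
    show ?thesis
    proof (cases "of_int j = r")
      case True
      have "sv_bracket (sv_unit (Y r)) (g (Y r)) (Y (2 * r)) = 0" by (rule Saa) (rule v)
      moreover have "sv_bracket (sv_unit (Y r)) (g (Y r)) (Y (2 * r)) = - of_real (of_int j / 2 - r) * g (Y r) (L j)"
        by (rule c_YY) (use True g_fin[OF v] in auto)
      moreover have "(of_real (of_int j / 2 - r) :: complex) \<noteq> 0" using True r by simp
      ultimately show ?thesis using L by (simp add: vscale_def sv_unit_def)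
    next
      case False thus ?thesis using L v by (simp add: G vscale_def sv_unit_def)
    qed
  next
    case (Y t)
    show ?thesis
    proof (cases "t = r")
      case True
      define m :: int where "m = (if 2 * r = 1 then -1 else 1)"
      have m0: "m \<noteq> 0" by (simp add: m_def)
      have m1: "of_int m / 2 - r \<noteq> 0" by (auto simp: m_def)
      have h0: "of_real (deg (L m)) * sv_bracket (sv_unit (L m)) (g (Y r)) (Y (of_int m + r)) +
            of_real (deg (Y r)) * sv_bracket (sv_unit (Y r)) (g (L m)) (Y (of_int m + r)) = 0"
        by (rule Cc) (use v in auto)
      have h1: "sv_bracket (sv_unit (L m)) (g (Y r)) (Y (of_int m + r)) = of_real (3 * of_int m / 2 - (of_int m + r)) * g (Y r) (Y r)"
        using c_LY[OF g_fin[OF v], of m "of_int m + r"] by simp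
      have h2: "sv_bracket (sv_unit (Y r)) (g (L m)) (Y (of_int m + r)) = - of_real (of_int m / 2 - r) * g (L m) (L m)"
        by (rule c_YY) (use g_fin in auto)
      have h3: "of_int m * (of_real (3 * of_int m / 2 - (of_int m + r)) * g (Y r) (Y r)) + of_real r * (- of_real (of_int m / 2 - r) * (- lam * of_int m)) = 0"
        using h0 unfolding h1 h2 gLL by simp
      have "of_int m * of_real (of_int m / 2 - r) * (g (Y r) (Y r) + lam * of_real r) =
            of_int m * (of_real (3 * of_int m / 2 - (of_int m + r)) * g (Y r) (Y r)) + of_real r * (- of_real (of_int m / 2 - r) * (- lam * of_int m))"
        by (simp add: field_simps)
      with h3 have "of_int m * of_real (of_int m / 2 - r) * (g (Y r) (Y r) + lam * of_real r) = 0" by simp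
      moreover have "(of_int m * of_real (of_int m / 2 - r) :: complex) \<noteq> 0"
      proof -
        have "(of_real (of_int m / 2 - r) :: complex) \<noteq> 0" using m1 by (subst of_real_eq_0_iff)
        moreover have "(of_int m :: complex) \<noteq> 0" using m0 by simp
        ultimately show ?thesis by (simp only: mult_eq_0_iff) blast
      qed
      ultimately have "g (Y r) (Y r) + lam * of_real r = 0" by (metis mult_eq_0_iff)
      then show ?thesis using Y True by (simp add: vscale_def sv_unit_def eq_neg_iff_add_eq_0)
    next
      case False thus ?thesis using Y v by (simp add: G vscale_def sv_unit_def)
    qed
  next
    case (M j)
    show ?thesis
    proof (cases "of_int j = r")
      case True
      have "of_real (deg (L 1)) * sv_bracket (sv_unit (L 1)) (g (Y r)) (M (1 + j)) +
            of_real (deg (Y r)) * sv_bracket (sv_unit (Y r)) (g (L 1)) (M (1 + j)) = 0"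
        by (rule Cc) (use v True in auto)
      moreover have "sv_bracket (sv_unit (L 1)) (g (Y r)) (M (1 + j)) = of_int (- j) * g (Y r) (M j)"
        using c_LM[OF g_fin[OF v], of 1 "1 + j"] by simp
      moreover have "sv_bracket (sv_unit (Y r)) (g (L 1)) (M (1 + j)) = 0"
        using c_YM[OF e g_SV[of "L 1"], of r "1 + j"] v by (simp add: valid_def)
      ultimately have "of_int j * g (Y r) (M j) = 0" by simp
      moreover have "j \<noteq> 0" using True r by auto
      ultimately show ?thesis using M by (simp add: vscale_def sv_unit_def)
    next
      case False thus ?thesis using M v by (simp add: G vscale_def sv_unit_def)
    qed
  qed
qed

lemma gY0: assumes v0: "valid eps (Y 0)" shows "g (Y 0) = (\<lambda>_. 0)"
proof -
  have v1: "valid eps (Y (-1))" using v0 by (simp add: valid_def)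
  have gm1: "g (Y (-1)) = vscale (- lam * of_real (-1)) (sv_unit (Y (-1)))" by (rule gY_nz[OF v1]) simp
  have hb: "sv_bracket (sv_unit (L 1)) (sv_unit (Y (-1))) = vscale (3/2) (sv_unit (Y 0))"
    unfolding br_units by (simp add: fun_eq_iff vscale_def sv_unit_def)
  have "f (sv_unit (L 0)) (sv_bracket (sv_unit (L 1)) (sv_unit (Y (-1)))) =
        vadd (sv_bracket (g (L 1)) (sv_unit (Y (-1)))) (sv_bracket (sv_unit (L 1)) (g (Y (-1))))"
    unfolding g_def by (rule B2) (simp_all add: uSV v1)
  then have "vscale (3/2) (g (Y 0)) = vadd (vscale (- lam * of_int 1) (sv_br (L 1) (Y (-1)))) (vscale (- lam * of_real (-1)) (sv_br (L 1) (Y (-1))))"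
    unfolding hb gm1 gL br_us_l br_us_r using v0 by (simp add: f_sc_unit_r g_def)
  then show ?thesis by (auto simp: fun_eq_iff vscale_def vadd_def)
qed

lemma half_ne: "real_of_int n \<noteq> 1/2"
proof
  assume "real_of_int n = 1/2"
  then have "real_of_int (2*n) = 1" by simp
  then have "2*n = 1" by (simp only: of_int_eq_1_iff)
  then show False by presburger
qed

lemma gM_nz: assumes n: "n \<noteq> 0"
  shows "g (M n) = vscale (- lam * of_int n) (sv_unit (M n))"
proof (rule ext)
  fix k
  show "g (M n) k = vscale (- lam * of_int n) (sv_unit (M n)) k"
  proof (cases k)
    case (L j)
    show ?thesis
    proof (cases "j = n")
      case True
      have "sv_bracket (sv_unit (M n)) (g (M n)) (M (2 * n)) = 0" by (rule Saa) simp
      moreover have "sv_bracket (sv_unit (M n)) (g (M n)) (M (2 * n)) = of_int n * g (M n) (L n)"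
        using c_MM[OF g_fin, of "M n" n "2 * n"] by simp
      ultimately show ?thesis using L True n by (simp add: vscale_def sv_unit_def)
    next
      case False thus ?thesis using L by (simp add: G vscale_def sv_unit_def)
    qed
  next
    case (Y t)
    show ?thesis
    proof (cases "t = of_int n")
      case True
      have h0: "of_real (deg (L 1)) * sv_bracket (sv_unit (L 1)) (g (M n)) (Y (1 + of_int n)) +
            of_real (deg (M n)) * sv_bracket (sv_unit (M n)) (g (L 1)) (Y (1 + of_int n)) = 0"
        by (rule Cc) auto
      have h1: "sv_bracket (sv_unit (L 1)) (g (M n)) (Y (1 + of_int n)) = of_real (3 * 1 / 2 - (1 + of_int n)) * g (M n) (Y (of_int n))"
        using c_LY[OF g_fin, of "M n" 1 "1 + of_int n"] by simp
      have h3: "of_real (1/2 - of_int n) * g (M n) (Y (of_int n)) = 0"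
        using h0 unfolding h1 c_MY by simp
      have "(of_real (1/2 - of_int n) :: complex) \<noteq> 0" using half_ne[of n] by (subst of_real_eq_0_iff) simp
      with h3 have "g (M n) (Y (of_int n)) = 0" by simp
      then show ?thesis using Y True by (simp add: vscale_def sv_unit_def)
    next
      case False thus ?thesis using Y by (simp add: G vscale_def sv_unit_def)
    qed
  next
    case (M j)
    show ?thesis
    proof (cases "j = n")
      case True
      have h0: "of_real (deg (L 1)) * sv_bracket (sv_unit (L 1)) (g (M n)) (M (1 + n)) +
            of_real (deg (M n)) * sv_bracket (sv_unit (M n)) (g (L 1)) (M (1 + n)) = 0"
        by (rule Cc) auto
      have h1: "sv_bracket (sv_unit (L 1)) (g (M n)) (M (1 + n)) = of_int (- n) * g (M n) (M n)"
        using c_LM[OF g_fin, of "M n" 1 "1 + n"] by simp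
      have h2: "sv_bracket (sv_unit (M n)) (g (L 1)) (M (1 + n)) = of_int n * g (L 1) (L 1)"
        using c_MM[OF g_fin, of "L 1" n "1 + n"] by simp
      have h3: "of_int (- n) * g (M n) (M n) + of_int n * (of_int n * (- lam)) = 0"
        using h0 unfolding h1 h2 gLL by simp
      have "of_int n * (g (M n) (M n) + lam * of_int n) = - (of_int (- n) * g (M n) (M n) + of_int n * (of_int n * (- lam)))"
        by (simp add: algebra_simps)
      with h3 have "of_int n * (g (M n) (M n) + lam * of_int n) = 0" by simp
      with n have "g (M n) (M n) + lam * of_int n = 0" by simp
      then show ?thesis using M True by (simp add: vscale_def sv_unit_def eq_neg_iff_add_eq_0)
    next
      case False thus ?thesis using M by (simp add: G vscale_def sv_unit_def)
    qed
  qed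
qed

lemma gM0: "g (M 0) = (\<lambda>_. 0)"
proof -
  have gm1: "g (M (-1)) = vscale (- lam * of_int (-1)) (sv_unit (M (-1)))" by (rule gM_nz) simp
  have hb: "sv_bracket (sv_unit (L 1)) (sv_unit (M (-1))) = vscale 1 (sv_unit (M 0))"
    unfolding br_units by (simp add: fun_eq_iff vscale_def sv_unit_def)
  have "f (sv_unit (L 0)) (sv_bracket (sv_unit (L 1)) (sv_unit (M (-1)))) =
        vadd (sv_bracket (g (L 1)) (sv_unit (M (-1)))) (sv_bracket (sv_unit (L 1)) (g (M (-1))))"
    unfolding g_def by (rule B2) (simp_all add: uSV)
  then have "vscale 1 (g (M 0)) = vadd (vscale (- lam * of_int 1) (sv_br (L 1) (M (-1)))) (vscale (- lam * of_int (-1)) (sv_br (L 1) (M (-1))))"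
    unfolding hb gm1 gL br_us_l br_us_r by (simp add: f_sc_unit_r g_def)
  then show ?thesis by (auto simp: fun_eq_iff vscale_def vadd_def)
qed

lemma g_formula: assumes v: "valid eps b" shows "g b = vscale (- lam * of_real (deg b)) (sv_unit b)"
proof (cases b)
  case (L n) thus ?thesis by (simp add: gL)
next
  case (Y r) thus ?thesis
    by (cases "r = 0") (use v gY0 gY_nz in \<open>auto simp: vscale_def\<close>)
next
  case (M n) thus ?thesis
    by (cases "n = 0") (use gM0 gM_nz in \<open>auto simp: vscale_def\<close>)
qed

end



lemma br_deg:
  fixes eps :: real
  assumes e: "eps = 0 \<or> eps = 1/2" and a: "valid eps a" and b: "valid eps b" and nz: "sv_br a b k \<noteq> 0"
  shows "deg k = deg a + deg b"
proof (cases a; cases b)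
  fix s t assume as: "a = Y s" and bs: "b = Y t"
  have "s + t \<in> \<int>" using int_sum_valid[OF e] a b as bs by (auto simp: valid_def)
  then obtain i where i: "s + t = of_int i" by (metis Ints_cases)
  have f1: "floor (s + t) = i" using i by (metis floor_of_int)
  show ?thesis using nz as bs f1 i by (auto simp: vscale_def sv_unit_def split: if_splits)
qed (use nz in \<open>auto simp: vscale_def sv_unit_def split: if_splits\<close>)

lemma rep:
  fixes eps :: real
  assumes a: "valid eps a"
  shows "\<exists>m y c. sv_br (L m) y = vscale c (sv_unit a) \<and> c \<noteq> 0 \<and> valid eps y \<and> of_int m \<noteq> deg a \<and> deg y \<noteq> deg a"
proof -
  define m :: int where "m = (if deg a > 0 then -1 else 1)"
  have m: "of_int m \<noteq> deg a" "m \<noteq> 0" by (auto simp: m_def)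
  show ?thesis
  proof (cases a)
    case (L p)
    have "sv_br (L m) (L (p - m)) = vscale (of_int (m - (p - m))) (sv_unit a) \<and> of_int (m - (p - m)) \<noteq> (0::complex) \<and> valid eps (L (p - m)) \<and> of_int m \<noteq> deg a \<and> deg (L (p - m)) \<noteq> deg a"
    proof -
      have "m - (p - m) \<noteq> 0" using L by (auto simp: m_def)
      then have "(of_int (m - (p - m)) :: complex) \<noteq> 0" by (subst of_int_eq_0_iff)
      then show ?thesis using L m by (auto simp: fun_eq_iff vscale_def sv_unit_def)
    qed
    then show ?thesis by blast
  next
    case (Y p)
    have "sv_br (L m) (Y (p - of_int m)) = vscale (of_real (of_int m / 2 - (p - of_int m))) (sv_unit a) \<and> (of_real (of_int m / 2 - (p - of_int m)) :: complex) \<noteq> 0 \<and> valid eps (Y (p - of_int m)) \<and> of_int m \<noteq> deg a \<and> deg (Y (p - of_int m)) \<noteq> deg a"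
    proof -
      have "of_int m / 2 - (p - of_int m) \<noteq> 0" using Y by (auto simp: m_def)
      then have "(of_real (of_int m / 2 - (p - of_int m)) :: complex) \<noteq> 0" by (subst of_real_eq_0_iff)
      moreover have "valid eps (Y (p - of_int m))" using a Y by (simp add: valid_def)
        (metis Ints_diff Ints_of_int diff_diff_eq add.commute diff_diff_eq2)
      ultimately show ?thesis using Y m by (auto simp: fun_eq_iff vscale_def sv_unit_def)
    qed
    then show ?thesis by blast
  next
    case (M p)
    have "sv_br (L m) (M (p - m)) = vscale (- of_int (p - m)) (sv_unit a) \<and> - of_int (p - m) \<noteq> (0::complex) \<and> valid eps (M (p - m)) \<and> of_int m \<noteq> deg a \<and> deg (M (p - m)) \<noteq> deg a"
      using M m by (auto simp: m_def)
    then show ?thesis by blast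
  qed
qed

context sbd begin

lemma ND: assumes a: "valid eps a" and b: "valid eps b" and nd: "\<not> (deg a = deg b \<and> deg k = deg a)"
  shows "F a b k = lam * sv_br a b k"
proof -
  have E1: "of_real (deg k - deg a) * F a b k = lam * of_real (deg b) * sv_br a b k"
    using W[OF a b, of k] unfolding g_formula[OF b] br_us_r by (simp add: vscale_def)
  have sb: "sv_br b a k = - sv_br a b k" by (rule sv_br_anti)
  have E2: "of_real (deg k - deg b) * F a b k = lam * of_real (deg a) * sv_br a b k"
    using W[OF b a, of k] unfolding g_formula[OF a] br_us_r F_anti[OF b a, of k] by (simp add: vscale_def sb)
  show ?thesis
  proof (cases "sv_br a b k = 0")
    case True
    then have "of_real (deg k - deg a) * F a b k = 0" "of_real (deg k - deg b) * F a b k = 0" using E1 E2 by auto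
    then have "F a b k = 0 \<or> (deg k = deg a \<and> deg k = deg b)" by auto
    with nd True show ?thesis by auto
  next
    case False
    then have dk: "deg k = deg a + deg b" by (rule br_deg[OF e a b])
    from E1 dk have E1': "of_real (deg b) * F a b k = of_real (deg b) * (lam * sv_br a b k)" by (simp add: algebra_simps)
    from E2 dk have E2': "of_real (deg a) * F a b k = of_real (deg a) * (lam * sv_br a b k)" by (simp add: algebra_simps)
    have "deg a \<noteq> 0 \<or> deg b \<noteq> 0" using nd dk by auto
    then show ?thesis using E1' E2' by auto
  qed
qed

lemma FD: "valid eps a \<Longrightarrow> valid eps b \<Longrightarrow> deg a \<noteq> deg b \<Longrightarrow> F a b = vscale lam (sv_br a b)"
  by (rule ext) (simp add: ND vscale_def)

lemma F_formula: assumes a: "valid eps a" and b: "valid eps b"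
  shows "F a b = vscale lam (sv_br a b)"
proof (cases "deg a = deg b")
  case False thus ?thesis using FD a b by blast
next
  case True
  obtain m y c where r: "sv_br (L m) y = vscale c (sv_unit a)" "c \<noteq> 0" "valid eps y" "of_int m \<noteq> deg a" "deg y \<noteq> deg a"
    using rep[OF a] by blast
  have "f (sv_bracket (sv_unit (L m)) (sv_unit y)) (sv_unit b) = vadd (sv_bracket (sv_unit (L m)) (F y b)) (sv_bracket (F (L m) b) (sv_unit y))"
    by (rule B1) (simp_all add: uSV b r)
  also have "\<dots> = vadd (sv_bracket (sv_unit (L m)) (vscale lam (sv_br y b))) (sv_bracket (vscale lam (sv_br (L m) b)) (sv_unit y))"
    using FD[OF r(3) b] FD[of "L m" b] r True b by simp
  also have "\<dots> = vscale lam (vadd (sv_bracket (sv_unit (L m)) (sv_br y b)) (sv_bracket (sv_br (L m) b) (sv_unit y)))"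
  proof -
    have X: "sv_bracket (sv_unit (L m)) (vscale lam (sv_br y b)) = vscale lam (sv_bracket (sv_unit (L m)) (sv_br y b))"
      by (rule br_scale_r) (simp_all add: fin_br)
    have Y: "sv_bracket (vscale lam (sv_br (L m) b)) (sv_unit y) = vscale lam (sv_bracket (sv_br (L m) b) (sv_unit y))"
      by (rule br_scale_l) (simp_all add: fin_br)
    show ?thesis unfolding X Y by (simp add: vadd_def vscale_def fun_eq_iff algebra_simps)
  qed
  also have "\<dots> = vscale lam (sv_bracket (sv_br (L m) y) (sv_unit b))"
    by (simp add: jac[OF e r(3) b])
  also have "\<dots> = vscale (lam * c) (sv_br a b)"
    unfolding r(1) by (simp add: br_us_l)
  finally have eq: "vscale c (F a b) = vscale (lam * c) (sv_br a b)"
    using a b r by (simp add: f_sc_unit_l)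
  show ?thesis
  proof (rule ext)
    fix k
    from eq have "c * F a b k = c * (lam * sv_br a b k)" by (auto simp: vscale_def fun_eq_iff algebra_simps)
    then show "F a b k = vscale lam (sv_br a b) k" using r(2) by (simp add: vscale_def)
  qed
qed

end



lemma SV_vscale: "x \<in> SV eps \<Longrightarrow> vscale c x \<in> SV eps"
proof -
  assume x: "x \<in> SV eps"
  have "sv_supp (vscale c x) \<subseteq> sv_supp x" by (rule fin_vscale)
  then have "finite (sv_supp (vscale c x))" using x SV_fin finite_subset by blast
  moreover have "\<forall>r. vscale c x (Y r) \<noteq> 0 \<longrightarrow> r - eps \<in> \<int>" using x by (simp add: SV_def vscale_def)
  ultimately show ?thesis by (simp add: SV_def)
qed

lemma SV_upd: "x \<in> SV eps \<Longrightarrow> x(a := 0) \<in> SV eps"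
proof -
  assume x: "x \<in> SV eps"
  have "sv_supp (x(a := 0)) \<subseteq> sv_supp x" by (auto simp: sv_supp_def)
  then have "finite (sv_supp (x(a := 0)))" using x SV_fin finite_subset by blast
  moreover have "\<forall>r. (x(a:=0)) (Y r) \<noteq> 0 \<longrightarrow> r - eps \<in> \<int>" using x by (simp add: SV_def)
  ultimately show ?thesis by (simp add: SV_def)
qed

lemma lin_ext:
  fixes hA hB :: "(sv_idx \<Rightarrow> complex) \<Rightarrow> (sv_idx \<Rightarrow> complex)"
  assumes addA: "\<And>x y. x \<in> SV eps \<Longrightarrow> y \<in> SV eps \<Longrightarrow> hA (vadd x y) = vadd (hA x) (hA y)"
    and scA: "\<And>c x. x \<in> SV eps \<Longrightarrow> hA (vscale c x) = vscale c (hA x)"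
    and addB: "\<And>x y. x \<in> SV eps \<Longrightarrow> y \<in> SV eps \<Longrightarrow> hB (vadd x y) = vadd (hB x) (hB y)"
    and scB: "\<And>c x. x \<in> SV eps \<Longrightarrow> hB (vscale c x) = vscale c (hB x)"
    and units: "\<And>a. valid eps a \<Longrightarrow> hA (sv_unit a) = hB (sv_unit a)"
    and x: "x \<in> SV eps"
  shows "hA x = hB x"
proof -
  have H: "\<forall>x. x \<in> SV eps \<longrightarrow> sv_supp x = S \<longrightarrow> hA x = hB x" if "finite S" for S
    using that
  proof (induction S rule: finite_induct)
    case empty
    show ?case
    proof (intro allI impI)
      fix x assume "x \<in> SV eps" "sv_supp x = {}"
      then have x0: "x = vscale 0 (sv_unit (L 0))" by (auto simp: sv_supp_def vscale_def fun_eq_iff)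
      have u: "sv_unit (L 0) \<in> SV eps" by (rule unit_SV) (simp add: valid_def)
      show "hA x = hB x" unfolding x0 scA[OF u] scB[OF u] by (simp add: vscale_def)
    qed
  next
    case (insert a S)
    show ?case
    proof (intro allI impI)
      fix x assume xs: "x \<in> SV eps" "sv_supp x = insert a S"
      have xa: "x a \<noteq> 0" using xs by (auto simp: sv_supp_def)
      have va: "valid eps a" using xs xa by (cases a) (auto simp: valid_def SV_def)
      have ua: "sv_unit a \<in> SV eps" by (rule unit_SV[OF va])
      have x'SV: "x(a := 0) \<in> SV eps" by (rule SV_upd[OF xs(1)])
      have x'supp: "sv_supp (x(a := 0)) = S" using xs insert.hyps(2) by (auto simp: sv_supp_def)
      have IH: "hA (x(a := 0)) = hB (x(a := 0))" using insert.IH x'SV x'supp by blast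
      have dec: "x = vadd (vscale (x a) (sv_unit a)) (x(a := 0))"
        by (auto simp: fun_eq_iff vadd_def vscale_def sv_unit_def)
      have sa: "vscale (x a) (sv_unit a) \<in> SV eps" by (rule SV_vscale[OF ua])
      let ?z = "vadd (vscale (x a) (sv_unit a)) (x(a := 0))"
      have "hA ?z = vadd (vscale (x a) (hA (sv_unit a))) (hA (x(a := 0)))"
        by (simp only: addA[OF sa x'SV] scA[OF ua])
      moreover have "hB ?z = vadd (vscale (x a) (hB (sv_unit a))) (hB (x(a := 0)))"
        by (simp only: addB[OF sa x'SV] scB[OF ua])
      ultimately have "hA ?z = hB ?z" by (simp only: units[OF va] IH)
      then show "hA x = hB x" by (simp only: dec[symmetric])
    qed
  qed
  show ?thesis using H[OF SV_fin[OF x]] x by blast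
qed

context sbd begin

lemma main1: assumes a: "valid eps a" and y: "y \<in> SV eps"
  shows "f (sv_unit a) y = vscale lam (sv_bracket (sv_unit a) y)"
proof (rule lin_ext[where hA = "f (sv_unit a)" and hB = "\<lambda>y. vscale lam (sv_bracket (sv_unit a) y)", OF _ _ _ _ _ y])
  show "\<And>x y. x \<in> SV eps \<Longrightarrow> y \<in> SV eps \<Longrightarrow> f (sv_unit a) (vadd x y) = vadd (f (sv_unit a) x) (f (sv_unit a) y)"
    by (rule f_add_r) (simp_all add: uSV a)
  show "\<And>c x. x \<in> SV eps \<Longrightarrow> f (sv_unit a) (vscale c x) = vscale c (f (sv_unit a) x)"
    by (rule f_sc_r) (simp_all add: uSV a)
  show "\<And>x y. x \<in> SV eps \<Longrightarrow> y \<in> SV eps \<Longrightarrow> vscale lam (sv_bracket (sv_unit a) (vadd x y)) = vadd (vscale lam (sv_bracket (sv_unit a) x)) (vscale lam (sv_bracket (sv_unit a) y))"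
    by (simp add: br_add_r SV_fin) (simp add: vadd_def vscale_def fun_eq_iff algebra_simps)
  show "\<And>c x. x \<in> SV eps \<Longrightarrow> vscale lam (sv_bracket (sv_unit a) (vscale c x)) = vscale c (vscale lam (sv_bracket (sv_unit a) x))"
    by (simp add: br_scale_r SV_fin mult.commute)
  show "\<And>b. valid eps b \<Longrightarrow> f (sv_unit a) (sv_unit b) = vscale lam (sv_bracket (sv_unit a) (sv_unit b))"
    using F_formula[OF a] by simp
qed

lemma main: assumes x: "x \<in> SV eps" and y: "y \<in> SV eps"
  shows "f x y = vscale lam (sv_bracket x y)"
proof (rule lin_ext[where hA = "\<lambda>x. f x y" and hB = "\<lambda>x. vscale lam (sv_bracket x y)", OF _ _ _ _ _ x])
  show "\<And>x z. x \<in> SV eps \<Longrightarrow> z \<in> SV eps \<Longrightarrow> f (vadd x z) y = vadd (f x y) (f z y)"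
    by (rule f_add_l) (simp_all add: y)
  show "\<And>c x. x \<in> SV eps \<Longrightarrow> f (vscale c x) y = vscale c (f x y)"
    by (rule f_sc_l) (simp_all add: y)
  show "\<And>x z. x \<in> SV eps \<Longrightarrow> z \<in> SV eps \<Longrightarrow> vscale lam (sv_bracket (vadd x z) y) = vadd (vscale lam (sv_bracket x y)) (vscale lam (sv_bracket z y))"
    using y by (simp add: br_add_l SV_fin) (simp add: vadd_def vscale_def fun_eq_iff algebra_simps)
  show "\<And>c x. x \<in> SV eps \<Longrightarrow> vscale lam (sv_bracket (vscale c x) y) = vscale c (vscale lam (sv_bracket x y))"
    using y by (simp add: br_scale_l SV_fin mult.commute)
  show "\<And>b. valid eps b \<Longrightarrow> f (sv_unit b) y = vscale lam (sv_bracket (sv_unit b) y)"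
    using main1 y by blast
qed

end

theorem corollary3p7:
  fixes eps :: real
    and f :: "(sv_idx \<Rightarrow> complex) \<Rightarrow> (sv_idx \<Rightarrow> complex) \<Rightarrow> (sv_idx \<Rightarrow> complex)"
  assumes "eps = 0 \<or> eps = 1/2"
    and "sv_biderivation eps f"
    and "sv_skew eps f"
  shows "\<exists>lam::complex. \<forall>x\<in>SV eps. \<forall>y\<in>SV eps. f x y = vscale lam (sv_bracket x y)"
proof -
  interpret sbd eps f using assms by unfold_locales
  show ?thesis by (intro exI[of _ lam] ballI main)
qed


end
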